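(* For every integer $M\ge1$, the minimum of $D(f)$ over all encoders $f$ such that the support of $f(X)$ has cardinality at most $M$ equals $\frac{1}{6M}$, and this minimum is achieved by an encoder that quantizes $U$ uniformly to $M$ values, i.e. that maps the realization corresponding to $U$ to the index $j$ of the interval $[(j-1)/M, j/M)$ containing $U$.
   Context: Let $U$ be uniformly distributed on $[0,1]$. The sawbridge is the random process $X(t) = t - \mathbf{1}(t\ge U)$, $t\in[0,1]$, viewed as a random element of $L^2[0,1]$; realizations are in one-to-one correspondence with values of $U$. An encoder is a (measurable) map $f:L^2[0,1]\to\mathbb{N}$ with distortion $D(f) = E\big[\int_0^1 (X(t)-E[X(t)\mid f(X)])^2\,dt\big]$. *)

theory Defs
  imports "HOL-Analysis.Analysis"
begin

text \<open>Sawbridge realization for U = u, as a function on [0,1] (extended by 0 outside,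
  representing an element of L2[0,1]).\<close>
definition sawbridge :: "real \<Rightarrow> (real \<Rightarrow> real)" where
  "sawbridge u = (\<lambda>t. if t \<in> {0..1} then t - (if t \<ge> u then 1 else 0) else 0)"

text \<open>U is uniform on [0,1]: probabilities/expectations are Lebesgue measure/integrals over [0,1].\<close>

text \<open>An encoder: a map from (representatives of) L2 functions to naturals such that
  f(X) is a random variable, i.e. u maps measurably to f (sawbridge u).\<close>
definition encoder :: "((real \<Rightarrow> real) \<Rightarrow> nat) \<Rightarrow> bool" where
  "encoder f \<longleftrightarrow> (\<lambda>u. f (sawbridge u)) \<in> measurable (restrict_space lborel {0..1}) (count_space UNIV)"

text \<open>The event {f(X) = k}, as a set of values of U.\<close>
definition cell :: "((real \<Rightarrow> real) \<Rightarrow> nat) \<Rightarrow> nat \<Rightarrow> real set" where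
  "cell f k = {u \<in> {0..1}. f (sawbridge u) = k}"

definition code_support :: "((real \<Rightarrow> real) \<Rightarrow> nat) \<Rightarrow> nat set" where
  "code_support f = {k. measure lborel (cell f k) > 0}"

text \<open>E[X(t) | f(X)] evaluated at the realization U = u (discrete conditioning).\<close>
definition cond_mean :: "((real \<Rightarrow> real) \<Rightarrow> nat) \<Rightarrow> real \<Rightarrow> real \<Rightarrow> real" where
  "cond_mean f t u =
     (let k = f (sawbridge u); p = measure lborel (cell f k) in
      if p = 0 then 0 else (LINT v:cell f k|lborel. sawbridge v t) / p)"

definition distortion :: "((real \<Rightarrow> real) \<Rightarrow> nat) \<Rightarrow> real" where
  "distortion f = (LINT u:{0..1}|lborel. LINT t:{0..1}|lborel. (sawbridge u t - cond_mean f t u)\<^sup>2)"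

end

theory Submission
  imports Defs
begin


lemma fm01: "A \<in> sets lborel \<Longrightarrow> A \<subseteq> {0..1::real} \<Longrightarrow> A \<in> fmeasurable lborel"
  by (rule fmeasurableI2[of "{0..1}"]) (auto intro: fmeasurableI)

locale cellset =
  fixes C :: "real set"
  assumes C_sets[measurable]: "C \<in> sets lborel" and C01: "C \<subseteq> {0..1}"
begin

definition "p = measure lborel C"
definition "a t = measure lborel (C \<inter> {..t})"

lemma Cfm: "C \<inter> X \<in> fmeasurable lborel" if "X \<in> sets lborel"
  using fm01[of "C \<inter> X"] C01 that by auto

lemma a_nonneg: "0 \<le> a t" by (simp add: a_def)

lemma a_le_p: "a t \<le> p"
  unfolding a_def p_def
  by (rule measure_mono_fmeasurable) (use fm01[OF C_sets C01] in auto)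

lemma a_diff: assumes "s \<le> t" shows "a t = a s + measure lborel (C \<inter> {s<..t})"
proof -
  have e: "C \<inter> {..t} = (C \<inter> {..s}) \<union> (C \<inter> {s<..t})" using assms by auto
  show ?thesis unfolding a_def e
    by (rule measure_Union) (auto intro!: fmeasurableD2[OF Cfm])
qed

lemma a_mono: "s \<le> t \<Longrightarrow> a s \<le> a t"
  using a_diff[of s t] by simp

lemma a_lip: assumes "s \<le> t" shows "a t - a s \<le> t - s"
proof -
  have "measure lborel (C \<inter> {s<..t}) \<le> measure lborel {s<..t}"
    by (rule measure_mono_fmeasurable) (use assms in \<open>auto intro!: fmeasurableI\<close>)
  then show ?thesis using a_diff[OF assms] assms by simp
qed

lemma a_cont: "continuous_on S a"
proof (rule continuous_on_subset[of UNIV], rule uniformly_continuous_imp_continuous)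
  show "uniformly_continuous_on UNIV a"
    unfolding uniformly_continuous_on_def
  proof (intro allI impI)
    fix e :: real assume "e > 0"
    show "\<exists>d>0. \<forall>x::real\<in>UNIV. \<forall>x'\<in>UNIV. dist x' x < d \<longrightarrow> dist (a x') (a x) < e"
    proof (intro exI[of _ e] conjI ballI impI)
      fix x x' :: real assume "dist x' x < e"
      moreover have "\<bar>a x' - a x\<bar> \<le> \<bar>x' - x\<bar>"
        using a_lip[of x x'] a_lip[of x' x] a_mono[of x x'] a_mono[of x' x]
        by (cases "x \<le> x'") auto
      ultimately show "dist (a x') (a x) < e" by (simp add: dist_real_def)
    qed (use \<open>e > 0\<close> in auto)
  qed
qed auto

lemma a0: "a t = 0" if "t \<le> 0"
proof -
  have "C \<inter> {..t} \<subseteq> {0}" using C01 that by auto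
  then have "measure lborel (C \<inter> {..t}) \<le> measure lborel {0::real}"
    by (intro measure_mono_fmeasurable) (auto intro!: fmeasurableI_null_sets countable_imp_null_set_lborel)
  then show ?thesis using a_nonneg[of t] unfolding a_def by simp
qed

lemma a1: "a t = p" if "t \<ge> 1"
proof -
  have "C \<inter> {..t} = C" using C01 that by auto
  then show ?thesis by (simp add: a_def p_def)
qed

lemma a_meas[measurable]: "a \<in> borel_measurable borel"
  by (rule borel_measurable_mono) (auto simp: mono_def a_mono)

lemma C_fm: "C \<in> fmeasurable lborel" using fm01[OF C_sets C01] .

lemma cdf: "emeasure lborel {t\<in>C. x < a t} = emeasure lborel ({x<..} \<inter> {0..p})"
proof -
  have p0: "0 \<le> p" by (simp add: p_def)
  consider "x < 0" | "p \<le> x" | "0 \<le> x" "x < p" by linarith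
  then show ?thesis
  proof cases
    case 1
    then have "{t\<in>C. x < a t} = C" using a_nonneg by (auto intro: less_le_trans)
    moreover have "{x<..} \<inter> {0..p} = {0..p}" using 1 by auto
    ultimately show ?thesis using p0 by (simp add: emeasure_eq_measure2[OF C_fm] p_def)
  next
    case 2
    then have "{t\<in>C. x < a t} = {}" using a_le_p by (auto simp: not_less intro: order.trans)
    moreover have "{x<..} \<inter> {0..p} = {}" using 2 by auto
    ultimately show ?thesis by (simp only:)
  next
    case 3
    define L where "L = {0..1} \<inter> a -` {..x}"
    have closedL: "closed L" unfolding L_def
      by (intro closed_Int closed_atLeastAtMost continuous_closed_vimage) (auto intro: continuous_on_interior[OF a_cont[of UNIV]])
    have L0: "0 \<in> L" using 3 a0[of 0] by (simp add: L_def)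
    have bdd: "bdd_above L" unfolding L_def by (auto intro!: bdd_aboveI[of _ 1])
    define \<tau> where "\<tau> = Sup L"
    have tauL: "\<tau> \<in> L" unfolding \<tau>_def using L0 bdd closedL by (intro closed_contains_Sup) auto
    have upper: "t \<in> L \<Longrightarrow> t \<le> \<tau>" for t unfolding \<tau>_def using bdd by (simp add: cSup_upper)
    have tau01: "0 \<le> \<tau>" "\<tau> \<le> 1" using tauL by (auto simp: L_def)
    have "\<exists>s. \<tau> \<le> s \<and> s \<le> 1 \<and> a s = x"
      using tauL 3 a1[of 1] tau01 by (intro IVT'[OF _ _ _ a_cont]) (auto simp: L_def)
    then obtain s where s: "\<tau> \<le> s" "s \<le> 1" "a s = x" by blast
    then have "s \<in> L" using tau01 by (auto simp: L_def)
    then have "s = \<tau>" using upper s by force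
    then have atau: "a \<tau> = x" using s by simp
    have set_eq: "{t\<in>C. x < a t} = C \<inter> {\<tau><..}"
    proof safe
      fix t assume t: "t \<in> C" "x < a t"
      show "\<tau> < t"
      proof (rule ccontr)
        assume "\<not> \<tau> < t" then have "a t \<le> a \<tau>" by (intro a_mono) simp
        then show False using t atau by simp
      qed
    next
      fix t assume t: "t \<in> C" "\<tau> < t"
      then have "t \<notin> L" using upper by force
      then show "x < a t" using t C01 by (auto simp: L_def)
    qed
    have Ceq: "C = (C \<inter> {..\<tau>}) \<union> (C \<inter> {\<tau><..})" by auto
    have "measure lborel ((C \<inter> {..\<tau>}) \<union> (C \<inter> {\<tau><..})) = a \<tau> + measure lborel (C \<inter> {\<tau><..})"
      unfolding a_def by (rule measure_Union) (auto intro!: fmeasurableD2[OF Cfm])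
    then have "p = a \<tau> + measure lborel (C \<inter> {\<tau><..})"
      unfolding p_def using Ceq by simp
    then have "measure lborel (C \<inter> {\<tau><..}) = p - x" using atau by simp
    moreover have "{x<..} \<inter> {0..p} = {x<..p}" using 3 by auto
    ultimately show ?thesis using 3 set_eq
      by (simp add: emeasure_eq_measure2[OF Cfm])
  qed
qed

lemma distr_eq: "distr (density lborel (indicator C)) borel a = density lborel (indicator {0..p})"
proof (rule measure_eqI_lessThan)
  fix x :: real
  have m: "a -` {x<..} \<in> sets lborel" using measurable_sets[OF a_meas, of "{x<..}"] by simp
  have e: "emeasure (distr (density lborel (indicator C)) borel a) {x<..} = emeasure lborel {t\<in>C. x < a t}"
    apply (subst emeasure_distr, simp, simp)
    apply (simp add: emeasure_restricted[OF C_sets m])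
    by (intro arg_cong[where f="emeasure lborel"]) auto
  show "emeasure (distr (density lborel (indicator C)) borel a) {x<..} < \<infinity>"
  proof -
    have "{t\<in>C. x < a t} = C \<inter> a -` {x<..}" by auto
    then show ?thesis unfolding e using fmeasurableD2[OF Cfm[OF m]] by (simp add: less_top)
  qed
  show "emeasure (distr (density lborel (indicator C)) borel a) {x<..} = emeasure (density lborel (indicator {0..p})) {x<..}"
    unfolding e cdf by (simp add: emeasure_restricted Int_commute)
qed auto

lemma key: "(LINT t:C|lborel. a t * (p - a t)) = p^3/6"
proof -
  define \<phi> where "\<phi> s = s * (p - s)" for s
  have [measurable]: "\<phi> \<in> borel_measurable borel" unfolding \<phi>_def by measurable
  have dens: "\<And>S::real set. density lborel (indicator S) = density lborel (\<lambda>x. ennreal (indicator S x))"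
    by (simp add: ennreal_indicator)
  have "(LINT t:C|lborel. a t * (p - a t)) = integral\<^sup>L lborel (\<lambda>t. indicator C t *\<^sub>R \<phi> (a t))"
    by (simp add: set_lebesgue_integral_def \<phi>_def)
  also have "\<dots> = integral\<^sup>L (density lborel (indicator C)) (\<lambda>t. \<phi> (a t))"
    unfolding dens by (rule integral_density[symmetric]) auto
  also have "\<dots> = integral\<^sup>L (distr (density lborel (indicator C)) borel a) \<phi>"
    by (subst integral_distr) auto
  also have "\<dots> = integral\<^sup>L lborel (\<lambda>s. indicator {0..p} s *\<^sub>R \<phi> s)"
    unfolding distr_eq unfolding dens by (subst integral_density) auto
  also have "\<dots> = (p * p^2/2 - p^3/3) - (p * 0^2/2 - 0^3/3)"
  proof (rule integral_FTC_atLeastAtMost[where F="\<lambda>s. p * s^2/2 - s^3/3"])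
    show "0 \<le> p" by (simp add: p_def)
    show "continuous_on {0..p} \<phi>" unfolding \<phi>_def by (intro continuous_intros)
    fix s :: real
    have "((\<lambda>s. p * s^2/2 - s^3/3) has_real_derivative \<phi> s) (at s within {0..p})"
      by (auto intro!: derivative_eq_intros simp: \<phi>_def algebra_simps power2_eq_square)
    then show "((\<lambda>s. p * s^2/2 - s^3/3) has_vector_derivative \<phi> s) (at s within {0..p})"
      by (simp add: has_real_derivative_iff_has_vector_derivative)
  qed
  finally show ?thesis by (simp add: power3_eq_cube power2_eq_square)
qed

lemma inner_u: assumes "0 < p"
  shows "(LINT u:C|lborel. (a t / p - (if u \<le> t then 1 else 0))^2) = a t - (a t)^2 / p"
proof -
  define \<alpha> where "\<alpha> = a t / p"
  have eq: "indicator C u *\<^sub>R (\<alpha> - (if u \<le> t then 1 else 0))^2 =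
     \<alpha>^2 * indicator C u - (2 * \<alpha> - 1) * indicator (C \<inter> {..t}) u" for u :: real
    by (auto simp: indicator_def power2_eq_square algebra_simps)
  have i1: "integrable lborel (indicator C :: real \<Rightarrow> real)"
    using fmeasurableD2[OF C_fm] C_sets by (intro integrable_real_indicator) (auto simp: less_top)
  have i2: "integrable lborel (indicator (C \<inter> {..t}) :: real \<Rightarrow> real)"
    using fmeasurableD2[OF Cfm[of "{..t}"]] by (intro integrable_real_indicator) (auto simp: less_top)
  have "(LINT u:C|lborel. (\<alpha> - (if u \<le> t then 1 else 0))^2) = \<alpha>^2 * p - (2 * \<alpha> - 1) * a t"
    unfolding set_lebesgue_integral_def eq using i1 i2
    by (simp add: p_def a_def)
  also have "\<dots> = a t - (a t)^2 / p" using assms by (simp add: \<alpha>_def field_simps power2_eq_square)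
  finally show ?thesis by (simp add: \<alpha>_def)
qed

lemma fub: assumes "0 < p"
  defines "G \<equiv> \<lambda>u t. (a t / p - (if u \<le> t then 1 else 0))^2"
  shows "integrable lborel (\<lambda>u. indicator C u * (LINT t:{0..1}|lborel. G u t))"
    and "integral\<^sup>L lborel (\<lambda>u. indicator C u * (LINT t:{0..1}|lborel. G u t)) = (LINT t:{0..1}|lborel. a t - (a t)^2/p)"
proof -
  define F where "F = (\<lambda>(u::real,t::real). indicator C u * (indicator {0..1} t * G u t))"
  have Gb: "\<bar>G u t\<bar> \<le> 1" for u t
  proof -
    have "0 \<le> a t / p" "a t / p \<le> 1" using assms(1) a_nonneg a_le_p by auto
    then have "\<bar>a t / p - (if u \<le> t then 1 else 0)\<bar> \<le> 1" by auto
    then show ?thesis unfolding G_def by (simp add: abs_square_le_1)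
  qed
  have Fm[measurable]: "F \<in> borel_measurable (lborel \<Otimes>\<^sub>M lborel)"
    unfolding F_def G_def by measurable
  have intF: "integrable (lborel \<Otimes>\<^sub>M lborel) F"
  proof (rule integrableI_bounded_set[where A="{0..1}\<times>{0..1}" and B=1])
    show "{0..1::real}\<times>{0..1::real} \<in> sets (lborel \<Otimes>\<^sub>M lborel)" by measurable
    show "emeasure (lborel \<Otimes>\<^sub>M lborel) ({0..1::real}\<times>{0..1::real}) < \<infinity>"
      by (simp add: lborel.emeasure_pair_measure_Times)
    show "AE x in lborel \<Otimes>\<^sub>M lborel. x \<in> {0..1}\<times>{0..1} \<longrightarrow> norm (F x) \<le> 1"
      using Gb by (auto simp: F_def indicator_def)
    show "AE x in lborel \<Otimes>\<^sub>M lborel. x \<notin> {0..1}\<times>{0..1} \<longrightarrow> F x = 0"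
      using C01 by (intro AE_I2) (auto simp: F_def indicator_def split: prod.splits)
  qed (rule Fm)
  have e1: "(\<lambda>u. \<integral>t. F (u,t) \<partial>lborel) = (\<lambda>u. indicator C u * (LINT t:{0..1}|lborel. G u t))"
    by (simp add: F_def set_lebesgue_integral_def)
  show "integrable lborel (\<lambda>u. indicator C u * (LINT t:{0..1}|lborel. G u t))"
    using lborel_pair.integrable_fst'[OF intF] unfolding e1 .
  have "integral\<^sup>L lborel (\<lambda>u. indicator C u * (LINT t:{0..1}|lborel. G u t))
      = (\<integral>u. (\<integral>t. (\<lambda>u t. F (u,t)) u t \<partial>lborel) \<partial>lborel)" unfolding e1 by simp
  also have "\<dots> = (\<integral>t. (\<integral>u. (\<lambda>u t. F (u,t)) u t \<partial>lborel) \<partial>lborel)"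
    by (rule lborel_pair.Fubini_integral[symmetric]) (use intF in simp)
  also have "\<dots> = (\<integral>t. indicator {0..1} t * (LINT u:C|lborel. G u t) \<partial>lborel)"
  proof -
    have "\<And>t. (LBINT u. indicator C u * (indicator {0..1} t * G u t)) = indicator {0..1} t * (LBINT u. indicator C u * G u t)"
      by (subst integral_mult_right_zero[symmetric]) (simp add: algebra_simps)
    then show ?thesis by (simp add: F_def set_lebesgue_integral_def)
  qed
  also have "\<dots> = (LINT t:{0..1}|lborel. a t - (a t)^2/p)"
    unfolding set_lebesgue_integral_def G_def
    using inner_u[OF assms(1)] by (simp add: set_lebesgue_integral_def)
  finally show "integral\<^sup>L lborel (\<lambda>u. indicator C u * (LINT t:{0..1}|lborel. G u t)) = (LINT t:{0..1}|lborel. a t - (a t)^2/p)" .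
qed

lemma cellint: assumes "t \<in> {0..1}"
  shows "(LINT v:C|lborel. sawbridge v t) = t * p - a t"
proof -
  have eq: "indicator C v *\<^sub>R sawbridge v t = t * indicator C v - indicator (C \<inter> {..t}) v" for v
    using assms by (auto simp: sawbridge_def indicator_def)
  have i1: "integrable lborel (indicator C :: real \<Rightarrow> real)"
    using fmeasurableD2[OF C_fm] C_sets by (intro integrable_real_indicator) (auto simp: less_top)
  have i2: "integrable lborel (indicator (C \<inter> {..t}) :: real \<Rightarrow> real)"
    using fmeasurableD2[OF Cfm[of "{..t}"]] by (intro integrable_real_indicator) (auto simp: less_top)
  show ?thesis unfolding set_lebesgue_integral_def eq using i1 i2 by (simp add: p_def a_def)
qed

lemma split01: "(LINT t:{0..1}|lborel. a t * (p - a t)) = p^3/6 + (LINT t:{0..1} - C|lborel. a t * (p - a t))"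
proof -
  have si: "set_integrable lborel {0..1} (\<lambda>t. a t * (p - a t))"
    by (intro borel_integrable_atLeastAtMost' continuous_intros a_cont)
  have "{0..1} = C \<union> ({0..1} - C)" using C01 by auto
  then have "(LINT t:{0..1}|lborel. a t * (p - a t)) = (LINT t:C \<union> ({0..1} - C)|lborel. a t * (p - a t))" by simp
  also have "\<dots> = (LINT t:C|lborel. a t * (p - a t)) + (LINT t:{0..1} - C|lborel. a t * (p - a t))"
    by (rule set_integral_Un) (use set_integrable_subset[OF si] C01 C_sets in auto)
  finally show ?thesis using key by simp
qed

lemma cost_eq: "(LINT t:{0..1}|lborel. a t - (a t)^2/p) = (LINT t:{0..1}|lborel. a t * (p - a t)) / p"
  if "0 < p"
proof -
  have "\<And>t. indicator {0..1} t * (a t - (a t)^2/p) = (indicator {0..1} t * (a t * (p - a t))) / p"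
    using that by (simp add: field_simps power2_eq_square)
  then show ?thesis unfolding set_lebesgue_integral_def by simp
qed

lemma cost_lower: assumes "0 < p" shows "(LINT t:{0..1}|lborel. a t - (a t)^2/p) \<ge> p^2/6"
proof -
  have "0 \<le> (LINT t:{0..1} - C|lborel. a t * (p - a t))"
    unfolding set_lebesgue_integral_def
    using a_nonneg a_le_p by (auto intro!: integral_nonneg_AE AE_I2 simp: indicator_def)
  then have "p^3/6 \<le> (LINT t:{0..1}|lborel. a t * (p - a t))" using split01 by simp
  then have "p^3/6/p \<le> (LINT t:{0..1}|lborel. a t * (p - a t)) / p" using assms by (intro divide_right_mono) auto
  then show ?thesis unfolding cost_eq[OF assms] using assms by (simp add: power3_eq_cube power2_eq_square)
qed

lemma cost_interval: assumes "0 < p" and z: "\<And>t. t \<in> {0..1} - C \<Longrightarrow> a t * (p - a t) = 0"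
  shows "(LINT t:{0..1}|lborel. a t - (a t)^2/p) = p^2/6"
proof -
  have "(LINT t:{0..1} - C|lborel. a t * (p - a t)) = 0"
    unfolding set_lebesgue_integral_def using z
    by (intro integral_eq_zero_AE AE_I2) (auto simp: indicator_def)
  then show ?thesis unfolding cost_eq[OF assms(1)] split01 using assms by (simp add: power3_eq_cube power2_eq_square)
qed

end


lemma sawbridge_meas[measurable]:
  assumes [measurable]: "f \<in> borel_measurable M" "g \<in> borel_measurable M"
  shows "(\<lambda>x. sawbridge (f x) (g x)) \<in> borel_measurable M"
  unfolding sawbridge_def by measurable

locale enc =
  fixes f :: "(real \<Rightarrow> real) \<Rightarrow> nat"
  assumes enc: "encoder f" and fin: "finite (code_support f)"
begin

definition "code u = (if u \<in> {0..1} then f (sawbridge u) else 0)"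
definition "mm k t = (if measure lborel (cell f k) = 0 then 0
     else (LINT v:cell f k|lborel. sawbridge v t) / measure lborel (cell f k))"
definition "H k u = (LINT t:{0..1}|lborel. (sawbridge u t - mm k t)^2)"
definition "h u = H (code u) u"

abbreviation "S \<equiv> code_support f"

lemma code_meas[measurable]: "code \<in> measurable lborel (count_space UNIV)"
  using enc unfolding encoder_def code_def
  by (subst (asm) measurable_restrict_space_iff[where c=0]) auto

lemma cell_eq: "cell f k = code -` {k} \<inter> {0..1}"
  by (auto simp: cell_def code_def)

lemma cell_sets[measurable]: "cell f k \<in> sets lborel"
proof -
  have A: "code -` {k} \<inter> space lborel \<in> sets lborel" by (rule measurable_sets[OF code_meas]) simp
  have "code -` {k} \<inter> space lborel \<inter> {0..1} \<in> sets lborel" using A by (rule sets.Int) simp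
  then show ?thesis by (simp add: cell_eq)
qed

lemma cellset: "cellset (cell f k)"
  by unfold_locales (use cell_sets in \<open>auto simp: cell_def\<close>)

lemma mm_meas[measurable]: "mm k \<in> borel_measurable lborel"
  unfolding mm_def set_lebesgue_integral_def by measurable

lemma H_meas[measurable]: "H k \<in> borel_measurable lborel"
  unfolding H_def set_lebesgue_integral_def by measurable

lemma h_meas[measurable]: "h \<in> borel_measurable lborel"
  unfolding h_def by (rule measurable_compose_countable[OF H_meas code_meas])

lemma distortion_h: "distortion f = (LINT u:{0..1}|lborel. h u)"
  unfolding distortion_def set_lebesgue_integral_def
  by (rule Bochner_Integration.integral_cong[OF refl]) (auto simp: indicator_def h_def H_def code_def cond_mean_def mm_def Let_def set_lebesgue_integral_def)

lemma not_S_null: "k \<notin> S \<Longrightarrow> cell f k \<in> null_sets lborel"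
proof -
  assume "k \<notin> S"
  then have "measure lborel (cell f k) = 0" using measure_nonneg[of lborel "cell f k"] by (simp add: code_support_def)
  moreover have "cell f k \<in> fmeasurable lborel" using cellset.C_fm[OF cellset] .
  ultimately show ?thesis by (intro null_setsI) (auto simp: emeasure_eq_measure2)
qed

lemma decomp01: fixes \<phi> :: "real \<Rightarrow> real" assumes [measurable]: "\<phi> \<in> borel_measurable lborel"
  shows "integral\<^sup>L lborel (\<lambda>u. indicator {0..1} u * \<phi> u) = integral\<^sup>L lborel (\<lambda>u. \<Sum>k\<in>S. indicator (cell f k) u * \<phi> u)"
proof (rule integral_cong_AE)
  define N where "N k = (if k \<in> S then {} else cell f k)" for k
  have "(\<Union>k. N k) \<in> null_sets lborel" by (intro null_sets_UN) (auto simp: N_def not_S_null)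
  then have ae: "AE u in lborel. u \<notin> (\<Union>k. N k)" by (rule AE_not_in)
  show "AE u in lborel. indicator {0..1} u * \<phi> u = (\<Sum>k\<in>S. indicator (cell f k) u * \<phi> u)"
    using ae
  proof (rule AE_mp, intro AE_I2 impI)
    fix u assume u: "u \<notin> (\<Union>k. N k)"
    show "indicator {0..1} u * \<phi> u = (\<Sum>k\<in>S. indicator (cell f k) u * \<phi> u)"
    proof (cases "u \<in> {0..1}")
      case True
      define k0 where "k0 = f (sawbridge u)"
      have ind: "indicator (cell f k) u * \<phi> u = (if k = k0 then \<phi> u else 0)" for k
        using True by (auto simp: cell_def k0_def indicator_def)
      have "u \<in> cell f k0" using True by (simp add: cell_def k0_def)
      then have "k0 \<in> S" using u by (auto simp: N_def split: if_splits)
      then show ?thesis using True fin by (simp add: ind)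
    next
      case False
      then have "indicator (cell f k) u = (0::real)" for k by (auto simp: cell_def indicator_def)
      then show ?thesis using False by simp
    qed
  qed
qed measurable

lemma sumP: "(\<Sum>k\<in>S. measure lborel (cell f k)) = 1"
proof -
  have "(1::real) = integral\<^sup>L lborel (\<lambda>u::real. indicator {0..1} u :: real)" by simp
  also have "\<dots> = integral\<^sup>L lborel (\<lambda>u::real. \<Sum>k\<in>S. indicator (cell f k) u :: real)"
    using decomp01[of "\<lambda>_. 1"] by simp
  also have "\<dots> = (\<Sum>k\<in>S. measure lborel (cell f k))"
  proof (subst Bochner_Integration.integral_sum)
    fix k show "integrable lborel (\<lambda>u. indicator (cell f k) u :: real)"
      using fmeasurableD2[OF cellset.C_fm[OF cellset]] cell_sets
      by (simp add: integrable_real_indicator less_top)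
  qed simp
  finally show ?thesis by simp
qed

lemma cell_cost:
  assumes kS: "k \<in> S"
  defines "C \<equiv> cell f k"
  shows "integrable lborel (\<lambda>u. indicator C u * h u)"
    and "integral\<^sup>L lborel (\<lambda>u. indicator C u * h u) =
           (LINT t:{0..1}|lborel. cellset.a C t - (cellset.a C t)^2 / cellset.p C)"
proof -
  interpret cellset C unfolding C_def by (rule cellset)
  have p0: "0 < p" unfolding C_def using kS by (simp add: code_support_def cellset.p_def[OF cellset])
  define G where "G \<equiv> \<lambda>u t. (a t / p - (if u \<le> t then 1 else (0::real)))^2"
  have mmt: "mm k t = t - a t / p" if "t \<in> {0..1}" for t
    using cellint[OF that] p0 unfolding mm_def C_def[symmetric] p_def[symmetric]
    by (simp add: field_simps)
  have hu: "h u = (LINT t:{0..1}|lborel. G u t)" if "u \<in> C" for u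
  proof -
    have u01: "u \<in> {0..1}" and fk: "f (sawbridge u) = k" using that by (auto simp: C_def cell_def)
    have "h u = H k u" using u01 fk by (simp add: h_def code_def)
    also have "\<dots> = (LINT t:{0..1}|lborel. G u t)"
      unfolding H_def set_lebesgue_integral_def
      by (rule Bochner_Integration.integral_cong[OF refl])
         (auto simp: indicator_def G_def mmt sawbridge_def)
    finally show ?thesis .
  qed
  have eqf: "(\<lambda>u. indicator C u * h u) = (\<lambda>u. indicator C u * (LINT t:{0..1}|lborel. G u t))"
    using hu by (auto simp: indicator_def)
  show "integrable lborel (\<lambda>u. indicator C u * h u)"
    unfolding eqf G_def by (rule fub(1)[OF p0])
  show "integral\<^sup>L lborel (\<lambda>u. indicator C u * h u) =
           (LINT t:{0..1}|lborel. a t - (a t)^2 / p)"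
    unfolding eqf G_def by (rule fub(2)[OF p0])
qed

lemma distortion_formula:
  "distortion f = (\<Sum>k\<in>S. LINT t:{0..1}|lborel. cellset.a (cell f k) t - (cellset.a (cell f k) t)^2 / cellset.p (cell f k))"
proof -
  have "distortion f = integral\<^sup>L lborel (\<lambda>u. indicator {0..1} u * h u)"
    unfolding distortion_h set_lebesgue_integral_def by simp
  also have "\<dots> = integral\<^sup>L lborel (\<lambda>u. \<Sum>k\<in>S. indicator (cell f k) u * h u)"
    by (rule decomp01) (rule h_meas)
  also have "\<dots> = (\<Sum>k\<in>S. integral\<^sup>L lborel (\<lambda>u. indicator (cell f k) u * h u))"
    by (rule Bochner_Integration.integral_sum) (rule cell_cost(1))
  also have "\<dots> = (\<Sum>k\<in>S. LINT t:{0..1}|lborel. cellset.a (cell f k) t - (cellset.a (cell f k) t)^2 / cellset.p (cell f k))"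
    by (rule sum.cong[OF refl]) (rule cell_cost(2))
  finally show ?thesis .
qed

end


lemma sawbridge_inj: assumes "u \<in> {0..1}" "v \<in> {0..1}" "sawbridge u = sawbridge v" shows "u = v"
proof (rule ccontr)
  assume "u \<noteq> v"
  then consider "u < v" | "v < u" by linarith
  then show False
  proof cases
    case 1
    have "sawbridge u u = sawbridge v u" using assms(3) by simp
    then show False using 1 assms(1,2) by (simp add: sawbridge_def)
  next
    case 2
    have "sawbridge u v = sawbridge v v" using assms(3) by simp
    then show False using 2 assms(1,2) by (simp add: sawbridge_def)
  qed
qed

lemma floor_char: fixes M :: nat and u :: real and j :: nat
  assumes "M \<ge> 1" "0 \<le> u" "j \<ge> 1"
  shows "nat \<lfloor>real M * u\<rfloor> + 1 = j \<longleftrightarrow> (real j - 1) / real M \<le> u \<and> u < real j / real M"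
proof -
  have M0: "real M > 0" using assms by simp
  have "nat \<lfloor>real M * u\<rfloor> + 1 = j \<longleftrightarrow> \<lfloor>real M * u\<rfloor> = int j - 1"
    using assms by (auto simp: nat_eq_iff)
  also have "\<dots> \<longleftrightarrow> real j - 1 \<le> real M * u \<and> real M * u < real j"
    by (simp add: floor_eq_iff)
  also have "\<dots> \<longleftrightarrow> (real j - 1) / real M \<le> u \<and> u < real j / real M"
    using M0 by (simp add: field_simps)
  finally show ?thesis .
qed

definition enc0 :: "nat \<Rightarrow> (real \<Rightarrow> real) \<Rightarrow> nat" where
  "enc0 M g = (if \<exists>u\<in>{0..<1}. g = sawbridge u
     then nat \<lfloor>real M * (SOME u. u \<in> {0..<1} \<and> g = sawbridge u)\<rfloor> + 1 else 0)"

lemma enc0_saw: assumes "u \<in> {0..1}"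
  shows "enc0 M (sawbridge u) = (if u < 1 then nat \<lfloor>real M * u\<rfloor> + 1 else 0)"
proof (cases "u < 1")
  case True
  then have ex: "\<exists>v. v \<in> {0..<1} \<and> sawbridge u = sawbridge v" using assms by auto
  have "(SOME v. v \<in> {0..<1} \<and> sawbridge u = sawbridge v) = u"
  proof (rule some_equality)
    show "u \<in> {0..<1} \<and> sawbridge u = sawbridge u" using True assms by auto
    fix v assume "v \<in> {0..<1} \<and> sawbridge u = sawbridge v"
    then show "v = u" using sawbridge_inj[of u v] assms by auto
  qed
  then show ?thesis using ex True unfolding enc0_def by auto
next
  case False
  then have "u = 1" using assms by auto
  have "\<not> (\<exists>v\<in>{0..<1}. sawbridge u = sawbridge v)"
    using sawbridge_inj[of u] \<open>u = 1\<close> by fastforce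
  then show ?thesis using False unfolding enc0_def by auto
qed

lemma measure_Ico: "(l::real) \<le> u \<Longrightarrow> measure lborel {l..<u} = u - l"
  by (simp add: measure_def)

context
  fixes M :: nat assumes M1: "M \<ge> 1"
begin

lemma int_sub: assumes "j \<in> {1..M}" shows "{(real j - 1)/real M..<real j/real M} \<subseteq> {0..1}"
proof
  fix x assume x: "x \<in> {(real j - 1)/real M..<real j/real M}"
  have "0 \<le> (real j - 1)/real M" using assms by simp
  moreover have "real j/real M \<le> 1" using assms M1 by simp
  ultimately show "x \<in> {0..1}" using x by auto
qed

lemma int_meas: "j \<in> {1..M} \<Longrightarrow> measure lborel {(real j - 1)/real M..<real j/real M} = 1 / real M"
  using M1 by (subst measure_Ico) (auto simp: field_simps)

lemma cell_enc0:
  "cell (enc0 M) j = (if j \<in> {1..M} then {(real j - 1)/real M..<real j/real M} else if j = 0 then {1} else {})"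
proof -
  have M0: "real M > 0" using M1 by simp
  {
    fix u :: real assume u: "u \<in> {0..1}"
    have "enc0 M (sawbridge u) = j \<longleftrightarrow>
        (if j \<in> {1..M} then u \<in> {(real j - 1)/real M..<real j/real M} else if j = 0 then u = 1 else False)"
    proof (cases "u < 1")
      case True
      have fl: "nat \<lfloor>real M * u\<rfloor> + 1 \<le> M"
      proof -
        have "real M * u < real M" using True M0 by simp
        then have "\<lfloor>real M * u\<rfloor> < int M" by linarith
        moreover have "0 \<le> \<lfloor>real M * u\<rfloor>" using u by simp
        ultimately have "nat \<lfloor>real M * u\<rfloor> < M" by (simp add: nat_less_iff)
        then show ?thesis by simp
      qed
      show ?thesis
      proof (cases "j \<in> {1..M}")
        case jin: True
        then show ?thesis using floor_char[OF M1, of u j] True u by (auto simp: enc0_saw)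
      next
        case jout: False
        then show ?thesis using True u fl by (auto simp: enc0_saw)
      qed
    next
      case False
      then have "u = 1" using u by auto
      have "\<not> (real j / real M \<le> 1 \<and> 1 < real j / real M)" by auto
      then show ?thesis using \<open>u = 1\<close> by (auto simp: enc0_saw)
    qed
  } note * = this
  show ?thesis
  proof (cases "j \<in> {1..M}")
    case True
    have "cell (enc0 M) j = {u \<in> {0..1}. u \<in> {(real j - 1)/real M..<real j/real M}}"
    proof -
      have "(enc0 M (sawbridge u) = j) = (u \<in> {(real j - 1)/real M..<real j/real M})" if "u \<in> {0..1}" for u
        using *[OF that] by (simp only: True if_True)
      then show ?thesis unfolding cell_def by (rule Collect_cong[OF conj_cong[OF refl]])
    qed
    also have "\<dots> = {(real j - 1)/real M..<real j/real M}" using int_sub[OF True] by auto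
    finally show ?thesis using True by simp
  next
    case False
    have "cell (enc0 M) j = {u \<in> {0..1}. if j = 0 then u = 1 else False}"
    proof -
      have "(enc0 M (sawbridge u) = j) = (if j = 0 then u = 1 else False)" if "u \<in> {0..1}" for u
        using *[OF that] by (simp only: False if_False)
      then show ?thesis unfolding cell_def by (rule Collect_cong[OF conj_cong[OF refl]])
    qed
    moreover have "{u \<in> {0..1::real}. if j = 0 then u = 1 else False} = (if j = 0 then {1} else {})" by auto
    ultimately show ?thesis by (simp only: if_not_P[OF False])
  qed
qed

lemma enc0_encoder: "encoder (enc0 M)"
proof -
  have "(\<lambda>u. enc0 M (sawbridge u)) \<in> measurable (restrict_space lborel {0..1}) (count_space UNIV)"
  proof (subst measurable_count_space_eq2_countable, intro conjI ballI)
    fix j :: nat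
    have "(\<lambda>u. enc0 M (sawbridge u)) -` {j} \<inter> space (restrict_space lborel {0..1}) = cell (enc0 M) j"
      by (auto simp: cell_def)
    also have "\<dots> \<in> sets (restrict_space lborel {0..1})"
      unfolding cell_enc0 using int_sub[of j]
      by (auto simp: sets_restrict_space_iff)
    finally show "(\<lambda>u. enc0 M (sawbridge u)) -` {j} \<inter> space (restrict_space lborel {0..1}) \<in> sets (restrict_space lborel {0..1})" .
  qed auto
  then show ?thesis by (simp add: encoder_def)
qed

lemma support_enc0: "code_support (enc0 M) = {1..M}"
  using M1 int_meas by (auto simp: code_support_def cell_enc0 split: if_splits)

lemma enc0_distortion: "distortion (enc0 M) = 1 / (6 * real M)"
proof -
  interpret enc "enc0 M" using enc0_encoder support_enc0 by unfold_locales auto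
  have M0: "real M > 0" using M1 by simp
  have cost: "(LINT t:{0..1}|lborel. cellset.a (cell (enc0 M) k) t - (cellset.a (cell (enc0 M) k) t)^2 / cellset.p (cell (enc0 M) k))
      = (1 / real M)^2 / 6" if k: "k \<in> {1..M}" for k
  proof -
    define C where "C = cell (enc0 M) k"
    interpret cellset C unfolding C_def by (rule cellset)
    define c where "c = (real k - 1)/real M"
    define d where "d = real k / real M"
    have Ceq: "C = {c..<d}" using k by (simp add: C_def cell_enc0 c_def d_def)
    have aeq: "a t = measure lborel (C \<inter> {..t})" for t by (simp add: C_def cellset.a_def[OF cellset])
    have peq: "p = measure lborel C" by (simp add: C_def cellset.p_def[OF cellset])
    have p: "p = 1 / real M" using peq Ceq int_meas[OF k] by (simp add: c_def d_def)
    have cd: "c \<le> d" using M0 by (simp add: c_def d_def divide_right_mono)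
    have "(LINT t:{0..1}|lborel. a t - (a t)^2/p) = p^2/6"
    proof (rule cost_interval)
      show "0 < p" using p M0 by simp
      fix t assume t: "t \<in> {0..1} - C"
      then have "t < c \<or> d \<le> t" using Ceq by auto
      then show "a t * (p - a t) = 0"
      proof
        assume "t < c"
        then have "C \<inter> {..t} = {}" using Ceq by auto
        then show ?thesis by (simp add: aeq)
      next
        assume "d \<le> t"
        then have "C \<inter> {..t} = C" using Ceq by auto
        then show ?thesis by (simp add: aeq peq)
      qed
    qed
    then show ?thesis using p by (simp add: C_def)
  qed
  have "distortion (enc0 M) = (\<Sum>k\<in>{1..M}. (1 / real M)^2 / 6)"
    unfolding distortion_formula support_enc0 by (rule sum.cong[OF refl]) (rule cost)
  also have "\<dots> = 1 / (6 * real M)" using M0 by (simp add: power2_eq_square field_simps)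
  finally show ?thesis .
qed

lemma enc0_spec: "\<forall>u \<in> {0..<1}. \<forall>j::nat. (real j - 1) / real M \<le> u \<and> u < real j / real M
                 \<longrightarrow> enc0 M (sawbridge u) = j"
proof (intro ballI allI impI)
  fix u :: real and j :: nat
  assume u: "u \<in> {0..<1}" and jj: "(real j - 1) / real M \<le> u \<and> u < real j / real M"
  have "j \<ge> 1"
  proof (rule ccontr)
    assume "\<not> j \<ge> 1" then have "j = 0" by simp
    then show False using jj u by simp
  qed
  then show "enc0 M (sawbridge u) = j" using u jj floor_char[OF M1, of u j] by (simp add: enc0_saw)
qed

end

lemma lower:
  assumes M1: "M \<ge> 1" and e: "encoder f" and fin: "finite (code_support f)" and c: "card (code_support f) \<le> M"
  shows "distortion f \<ge> 1 / (6 * real M)"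
proof -
  interpret enc f using e fin by unfold_locales
  define n where "n = card S"
  define P where "P k = measure lborel (cell f k)" for k
  have sP: "(\<Sum>k\<in>S. P k) = 1" using sumP by (simp add: P_def)
  have "S \<noteq> {}" using sP by auto
  then have n0: "n > 0" using fin by (simp add: n_def card_gt_0_iff)
  have "0 \<le> (\<Sum>k\<in>S. (P k - 1/n)^2)" by (simp add: sum_nonneg)
  also have "\<dots> = (\<Sum>k\<in>S. (P k)^2) - 2/n * (\<Sum>k\<in>S. P k) + n * (1/n)^2"
  proof -
    have "(\<Sum>k\<in>S. (P k - 1/n)^2) = (\<Sum>k\<in>S. (P k)^2 - (2/n) * P k + (1/n)^2)"
      by (rule sum.cong[OF refl]) (simp add: power2_diff)
    also have "\<dots> = (\<Sum>k\<in>S. (P k)^2) - (\<Sum>k\<in>S. (2/n) * P k) + (\<Sum>k\<in>S. (1/n)^2)"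
      by (simp add: sum.distrib sum_subtractf)
    also have "\<dots> = (\<Sum>k\<in>S. (P k)^2) - 2/n * (\<Sum>k\<in>S. P k) + n * (1/n)^2"
    proof -
      have "(\<Sum>k\<in>S. (2/n) * P k) = 2/n * (\<Sum>k\<in>S. P k)" by (rule sum_distrib_left[symmetric])
      moreover have "(\<Sum>k\<in>S. (1/real n)^2) = n * (1/n)^2" by (simp add: n_def)
      ultimately show ?thesis by simp
    qed
    finally show ?thesis .
  qed
  also have "\<dots> = (\<Sum>k\<in>S. (P k)^2) - 1/n" using n0 sP by (simp add: power2_eq_square field_simps)
  finally have sq: "1/n \<le> (\<Sum>k\<in>S. (P k)^2)" by simp
  have "1 / (6 * real M) \<le> 1 / (6 * real n)"
    using n0 c by (intro divide_left_mono) (auto simp: n_def)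
  also have "\<dots> \<le> (\<Sum>k\<in>S. (P k)^2) / 6" using sq by simp
  also have "\<dots> = (\<Sum>k\<in>S. (P k)^2 / 6)" by (rule sum_divide_distrib)
  also have "\<dots> \<le> distortion f"
    unfolding distortion_formula
  proof (rule sum_mono)
    fix k assume k: "k \<in> S"
    interpret cellset "cell f k" by (rule cellset)
    have "0 < p" using k by (simp add: code_support_def p_def)
    from cost_lower[OF this] show "(P k)^2 / 6 \<le> (LINT t:{0..1}|lborel. a t - (a t)^2/p)"
      by (simp add: P_def p_def)
  qed
  finally show ?thesis .
qed

theorem mainTheorem5:
  fixes M :: nat
  assumes "M \<ge> 1"
  shows "(\<forall>f. encoder f \<and> finite (code_support f) \<and> card (code_support f) \<le> M
            \<longrightarrow> distortion f \<ge> 1 / (6 * real M))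
       \<and> (\<exists>f. encoder f \<and> finite (code_support f) \<and> card (code_support f) \<le> M
            \<and> (\<forall>u \<in> {0..<1}. \<forall>j::nat. (real j - 1) / real M \<le> u \<and> u < real j / real M
                 \<longrightarrow> f (sawbridge u) = j)
            \<and> distortion f = 1 / (6 * real M))"
proof
  show "\<forall>f. encoder f \<and> finite (code_support f) \<and> card (code_support f) \<le> M
            \<longrightarrow> distortion f \<ge> 1 / (6 * real M)"
    using lower[OF assms] by blast
  show "\<exists>f. encoder f \<and> finite (code_support f) \<and> card (code_support f) \<le> M
            \<and> (\<forall>u \<in> {0..<1}. \<forall>j::nat. (real j - 1) / real M \<le> u \<and> u < real j / real M
                 \<longrightarrow> f (sawbridge u) = j)
            \<and> distortion f = 1 / (6 * real M)"
    using enc0_encoder[OF assms] support_enc0[OF assms] enc0_spec[OF assms] enc0_distortion[OF assms]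
    by (intro exI[of _ "enc0 M"]) auto
qed


end
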